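(* Let $m\geq 2$ be an integer and $(t_n)_{n=0}^{\infty}$ the $TM_m$ sequence. If $m=2$, then $(t_n)_{n=0}^{\infty}$ is palindromic. If $m>2$, then $(t_n)_{n=0}^{\infty}$ is not eventually palindromic.
   Context: For an integer $m\geq 2$, the $TM_m$ sequence $(t_n)_{n=0}^{\infty}$ is defined by: if $n=\sum_{j=0}^{k}c_j m^j$ is the base-$m$ expansion of $n\geq 0$ (digits $c_j\in\{0,\ldots,m-1\}$), then $t_n:=\sum_{j=0}^{k}c_j \bmod m$. A sequence $(x_i)_{i=0}^{\infty}$ is palindromic if there exists an increasing sequence of positive integers $(n_j)_{j\geq 1}$ such that for every $j$ and every $k\in\{0,\ldots,n_j\}$, $x_k=x_{n_j-k}$. It is eventually palindromic if there is $N$ such that $(x_{N+i})_{i=0}^{\infty}$ is palindromic. *)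

theory Defs
  imports Main
begin

fun digit_sum :: "nat \<Rightarrow> nat \<Rightarrow> nat" where
  "digit_sum m n = (if m < 2 \<or> n = 0 then 0 else n mod m + digit_sum m (n div m))"

declare digit_sum.simps [simp del]

definition TM :: "nat \<Rightarrow> nat \<Rightarrow> nat" where
  "TM m n = digit_sum m n mod m"

definition palindromic :: "(nat \<Rightarrow> 'a) \<Rightarrow> bool" where
  "palindromic x \<longleftrightarrow> (\<exists>ns :: nat \<Rightarrow> nat. strict_mono ns \<and> (\<forall>j. ns j > 0) \<and>
     (\<forall>j. \<forall>k \<le> ns j. x k = x (ns j - k)))"

definition eventually_palindromic :: "(nat \<Rightarrow> 'a) \<Rightarrow> bool" where
  "eventually_palindromic x \<longleftrightarrow> (\<exists>N. palindromic (\<lambda>i. x (N + i)))"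

end

theory Submission
  imports Defs
begin

lemma ds_step:
  assumes "m \<ge> 2" "d < m"
  shows "digit_sum m (x*m+d) = d + digit_sum m x"
proof (cases "x*m+d = 0")
  case True
  then have "x = 0 \<or> m = 0" "d = 0" by auto
  then show ?thesis using True assms by (auto simp: digit_sum.simps)
next
  case False
  have "(x*m+d) mod m = d" "(x*m+d) div m = x" using assms by auto
  then show ?thesis using False assms by (subst digit_sum.simps) auto
qed

lemma ds_compl:
  assumes "m \<ge> 2"
  shows "k < m^L \<Longrightarrow> digit_sum m (m^L - 1 - k) + digit_sum m k = L*(m-1)"
proof (induction L arbitrary: k)
  case 0
  then show ?case by (simp add: digit_sum.simps)
next
  case (Suc L)
  define q where "q = k div m"
  define r where "r = k mod m"
  have k: "k = q*m + r" unfolding q_def r_def by simp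
  have rm: "r < m" unfolding r_def using assms by simp
  have qL: "q < m^L" using Suc.prems unfolding q_def
    by (simp add: less_mult_imp_div_less mult.commute)
  have e: "m^(Suc L) - 1 - k = (m^L - 1 - q)*m + (m - 1 - r)"
  proof -
    have "q + 1 \<le> m^L" using qL by simp
    then obtain t where t: "m^L = q + 1 + t" by (metis le_add_diff_inverse)
    have "m^(Suc L) = (q+1+t)*m" using t by simp
    then show ?thesis using k rm t by (simp add: algebra_simps)
  qed
  have "digit_sum m (m^(Suc L) - 1 - k) = (m-1-r) + digit_sum m (m^L - 1 - q)"
    using e ds_step[OF assms, of "m-1-r" "m^L - 1 - q"] rm by (simp del: power_Suc)
  moreover have "digit_sum m k = r + digit_sum m q" using k ds_step[OF assms rm] by simp
  ultimately show ?case using Suc.IH[OF qL] rm by simp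
qed

lemma ds_succ:
  assumes "m \<ge> 2" "a mod m \<noteq> m - 1"
  shows "digit_sum m (a+1) = digit_sum m a + 1"
proof -
  have "a mod m < m" using assms by simp
  then have "a mod m + 1 < m" using assms(2) by linarith
  then have "(a+1) mod m = a mod m + 1" "(a+1) div m = a div m"
    by (simp_all add: mod_Suc div_Suc)
  then show ?thesis using assms
    by (subst (1 2) digit_sum.simps) (auto simp: digit_sum.simps)
qed

lemma tm_succ:
  assumes "m \<ge> 2" "a mod m \<noteq> m - 1"
  shows "TM m (a+1) = (TM m a + 1) mod m"
  using ds_succ[OF assms] unfolding TM_def by (simp add: mod_Suc_eq)

lemma dmod:
  assumes "m > (2::nat)" "k < l" "l \<le> 2"
  shows "(x+k) mod m \<noteq> (x+l) mod m"
proof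
  assume "(x+k) mod m = (x+l) mod m"
  then have "m dvd (x+l) - (x+k)" using mod_eq_dvd_iff_nat[of "x+k" "x+l" m] assms by simp
  then have "m dvd l - k" by simp
  moreover have "0 < l - k" "l - k < m" using assms by auto
  ultimately show False using dvd_imp_le leD by blast
qed

theorem theorem2p2:
  fixes m :: nat
  assumes "m \<ge> 2"
  shows "(m = 2 \<longrightarrow> palindromic (TM m)) \<and> (m > 2 \<longrightarrow> \<not> eventually_palindromic (TM m))"
proof (intro conjI impI)
  assume m2: "m = 2"
  define ns where "ns j = (2::nat)^(2*(j+1)) - 1" for j
  have "strict_mono ns" unfolding strict_mono_def ns_def
  proof (intro allI impI)
    fix x y :: nat assume "x < y"
    then have "(2::nat)^(2*(x+1)) < 2^(2*(y+1))" by simp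
    moreover have "(1::nat) \<le> 2^(2*(x+1))" by simp
    ultimately show "(2::nat)^(2*(x+1)) - 1 < 2^(2*(y+1)) - 1" by linarith
  qed
  moreover have "\<forall>j. ns j > 0" unfolding ns_def
  proof
    fix j have "(2::nat) \<le> 2^(2*(j+1))"
    proof -
      have "(1::nat) \<le> 2^(2*j)" by simp
      then show ?thesis by (simp add: power_add)
    qed
    then show "0 < (2::nat)^(2*(j+1)) - 1" by linarith
  qed
  moreover have "\<forall>j. \<forall>k \<le> ns j. TM m k = TM m (ns j - k)"
  proof (intro allI impI)
    fix j k assume "k \<le> ns j"
    then have kl: "k < 2^(2*(j+1))" unfolding ns_def
    proof -
      have "(0::nat) < 2^(2*(j+1))" by simp
      then show ?thesis using \<open>k \<le> ns j\<close> unfolding ns_def by linarith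
    qed
    have "digit_sum 2 (2^(2*(j+1)) - 1 - k) + digit_sum 2 k = 2*(j+1)"
      using ds_compl[of 2 k "2*(j+1)"] kl by simp
    then have "even (digit_sum 2 (ns j - k) + digit_sum 2 k)" unfolding ns_def by simp
    then have "even (digit_sum 2 (ns j - k)) = even (digit_sum 2 k)" by simp
    then have "digit_sum 2 (ns j - k) mod 2 = digit_sum 2 k mod 2"
      by (metis even_iff_mod_2_eq_zero odd_iff_mod_2_eq_one)
    then show "TM m k = TM m (ns j - k)" using m2 unfolding TM_def by simp
  qed
  ultimately show "palindromic (TM m)" unfolding palindromic_def by blast
next
  assume m3: "m > 2"
  show "\<not> eventually_palindromic (TM m)"
  proof
    assume "eventually_palindromic (TM m)"
    then obtain N ns where sm: "strict_mono (ns::nat\<Rightarrow>nat)"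
      and P: "\<forall>j. \<forall>k \<le> ns j. TM m (N + k) = TM m (N + (ns j - k))"
      unfolding eventually_palindromic_def palindromic_def by blast
    define n where "n = ns 3"
    have n3: "n \<ge> 3" unfolding n_def using sm by (metis strict_mono_imp_increasing)
    have Pn: "\<And>k. k \<le> n \<Longrightarrow> TM m (N + k) = TM m (N + (n - k))"
      using P n_def by blast
    define z where "z = N + n - 3"
    have zk: "\<And>k. k \<le> 2 \<Longrightarrow> N+n-k-1 = z + (2-k)" using n3 unfolding z_def by auto
    have "\<exists>k\<le>2. (N + k) mod m \<noteq> m - 1 \<and> (N + n - k - 1) mod m \<noteq> m - 1"
    proof (rule ccontr)
      assume H: "\<not> ?thesis"
      have c: "(N+k) mod m = m - 1 \<or> (z+(2-k)) mod m = m-1" if kk: "k \<le> 2" for k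
      proof -
        have "(N+k) mod m = m - 1 \<or> (N+n-k-1) mod m = m-1" using H kk by auto
        then show ?thesis using zk[OF kk] by simp
      qed
      have c0: "(N+0) mod m = m - 1 \<or> (z+2) mod m = m-1" using c[of 0] by simp
      have c1: "(N+1) mod m = m - 1 \<or> (z+1) mod m = m-1" using c[of 1] by simp
      have c2: "(N+2) mod m = m - 1 \<or> (z+0) mod m = m-1" using c[of 2] by simp
      have d1: "(N+0) mod m \<noteq> (N+1) mod m" "(N+0) mod m \<noteq> (N+2) mod m" "(N+1) mod m \<noteq> (N+2) mod m"
        by (rule dmod[OF m3]; simp)+
      have d2: "(z+0) mod m \<noteq> (z+1) mod m" "(z+0) mod m \<noteq> (z+2) mod m" "(z+1) mod m \<noteq> (z+2) mod m"
        by (rule dmod[OF m3]; simp)+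
      show False using c0 c1 c2 d1 d2 by argo
    qed
    then obtain k where k: "k \<le> 2" "(N + k) mod m \<noteq> m - 1" "(N + n - k - 1) mod m \<noteq> m - 1"
      by blast
    have A: "TM m (N+k+1) = (TM m (N+k) + 1) mod m" using tm_succ[OF assms k(2)] by simp
    have e: "N + n - k - 1 + 1 = N + (n - k)" "N + n - k - 1 = N + (n - (k+1))" using k n3 by auto
    have B: "TM m (N+(n-k)) = (TM m (N+(n-(k+1))) + 1) mod m"
    proof -
      have "TM m (N + n - k - 1 + 1) = (TM m (N + n - k - 1) + 1) mod m" by (rule tm_succ[OF assms k(3)])
      then show ?thesis unfolding e(1) unfolding e(2) .
    qed
    have E1: "TM m (N + k) = TM m (N + (n - k))" using Pn k n3 by simp
    have E2: "TM m (N + (k+1)) = TM m (N + (n - (k+1)))" using Pn[of "k+1"] k n3 by simp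
    define a where "a = TM m (N+k)"
    define b where "b = TM m (N+k+1)"
    have ab: "b = (a+1) mod m" using A a_def b_def by simp
    have ba: "a = (b+1) mod m" using B E1 E2 unfolding a_def b_def by (simp add: add.assoc)
    have "a mod m = (a + 2) mod m"
    proof -
      have "a mod m = a" using ba by simp
      also have "\<dots> = ((a+1) mod m + 1) mod m" using ba ab by simp
      also have "\<dots> = (a+2) mod m" by (simp add: mod_Suc_eq)
      finally show ?thesis .
    qed
    then have "m dvd (a+2) - a" using mod_eq_dvd_iff_nat[of a "a+2" m] by simp
    then have "m dvd 2" by simp
    then show False using m3 by (simp add: dvd_imp_le leD)
  qed
qed

end
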